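(* Assume $\mathfrak{b}<\mathfrak{q}$. Then there exists a compact Hausdorff sequentially separable space which is not selectively sequentially separable.
   Context: $\mathfrak{b}$ is the least cardinality of a subset of $\mathbb{N}^{\mathbb{N}}$ unbounded with respect to $\leq^*$, where $f\leq^* g$ means $f(n)\leq g(n)$ for all but finitely many $n$. A $Q$-set is a subset of $\mathbb{R}$ every subset of which is a $G_\delta$ in it; $\mathfrak{q}$ is the least cardinal $\lambda$ such that there is no $Q$-set of size $\lambda$ (equivalently, the smallest cardinal such that for every $\kappa<\mathfrak{q}$ there is a $Q$-set of size $\kappa$). A space is sequentially separable if it has a countable sequentially dense subset (every point is a limit of a sequence from it). A space $Z$ is selectively sequentially separable if for every sequence $(D_n:n\in\mathbb{N})$ of sequentially dense subsets of $Z$ one can choose finite $F_n\subseteq D_n$ so that $\bigcup_n F_n$ is sequentially dense in $Z$. *)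

theory Defs
  imports "HOL-Analysis.Analysis"
begin

definition le_star :: "(nat \<Rightarrow> nat) \<Rightarrow> (nat \<Rightarrow> nat) \<Rightarrow> bool" where
  "le_star f g \<longleftrightarrow> (\<forall>\<^sub>F n in sequentially. f n \<le> g n)"

definition unbounded_family :: "(nat \<Rightarrow> nat) set \<Rightarrow> bool" where
  "unbounded_family F \<longleftrightarrow> \<not> (\<exists>g. \<forall>f\<in>F. le_star f g)"

definition Q_set :: "real set \<Rightarrow> bool" where
  "Q_set X \<longleftrightarrow> (\<forall>A\<subseteq>X. \<exists>U :: nat \<Rightarrow> real set.
      (\<forall>n. open (U n)) \<and> A = X \<inter> (\<Inter>n. U n))"

text \<open>b < q: with F an unbounded family of least cardinality (|F| = b),
  every cardinal \<lambda> \<le> b is the size of some Q-set (q being the least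
  cardinal with no Q-set of that size).\<close>
definition b_less_q :: bool where
  "b_less_q \<longleftrightarrow> (\<exists>F :: (nat \<Rightarrow> nat) set. unbounded_family F \<and>
      (\<forall>G. unbounded_family G \<longrightarrow> (card_of F, card_of G) \<in> ordLeq) \<and>
      (\<forall>Y :: (nat \<Rightarrow> nat) set. (card_of Y, card_of F) \<in> ordLeq \<longrightarrow>
          (\<exists>X :: real set. Q_set X \<and> (card_of X, card_of Y) \<in> ordIso)))"

definition seq_dense :: "'a topology \<Rightarrow> 'a set \<Rightarrow> bool" where
  "seq_dense T D \<longleftrightarrow> D \<subseteq> topspace T \<and>
     (\<forall>x\<in>topspace T. \<exists>s. (\<forall>n. s n \<in> D) \<and> limitin T s x sequentially)"

definition seq_separable :: "'a topology \<Rightarrow> bool" where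
  "seq_separable T \<longleftrightarrow> (\<exists>D. countable D \<and> seq_dense T D)"

definition selectively_seq_separable :: "'a topology \<Rightarrow> bool" where
  "selectively_seq_separable T \<longleftrightarrow>
     (\<forall>D :: nat \<Rightarrow> 'a set. (\<forall>n. seq_dense T (D n)) \<longrightarrow>
        (\<exists>F :: nat \<Rightarrow> 'a set. (\<forall>n. finite (F n) \<and> F n \<subseteq> D n) \<and>
            seq_dense T (\<Union>n. F n)))"

end

theory Submission
  imports Defs
begin


lemma limitin_discrete_iff:
  "limitin (discrete_topology U) f l F \<longleftrightarrow> l \<in> U \<and> eventually (\<lambda>x. f x = l) F"
proof
  assume L: "limitin (discrete_topology U) f l F"
  then have "l \<in> U" by (simp add: limitin_def)
  moreover have "eventually (\<lambda>x. f x \<in> {l}) F"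
    using L \<open>l \<in> U\<close> unfolding limitin_def by auto
  ultimately show "l \<in> U \<and> eventually (\<lambda>x. f x = l) F" by simp
next
  assume "l \<in> U \<and> eventually (\<lambda>x. f x = l) F"
  then show "limitin (discrete_topology U) f l F"
    unfolding limitin_def by (auto elim: eventually_mono)
qed

lemma seq_dense_image:
  assumes c: "continuous_map K T h" and s: "h ` topspace K = topspace T"
    and d: "seq_dense K D"
  shows "seq_dense T (h ` D)"
  unfolding seq_dense_def
proof (intro conjI ballI)
  show "h ` D \<subseteq> topspace T" using d s unfolding seq_dense_def by auto
next
  fix y assume "y \<in> topspace T"
  then obtain x where x: "x \<in> topspace K" "y = h x" using s by auto
  then obtain q where q: "\<forall>n. q n \<in> D" "limitin K q x sequentially"
    using d unfolding seq_dense_def by auto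
  have "limitin T (h \<circ> q) (h x) sequentially"
    using continuous_map_limit[OF c q(2)] .
  then show "\<exists>s. (\<forall>n. s n \<in> h ` D) \<and> limitin T s y sequentially"
    using q(1) x by (intro exI[of _ "h \<circ> q"]) auto
qed


lemma transfer_props:
  fixes K :: "'a topology" and T :: "'b topology"
  assumes hm: "homeomorphic_maps K T h g"
    and sep: "seq_separable K" and nsss: "\<not> selectively_seq_separable K"
  shows "seq_separable T \<and> \<not> selectively_seq_separable T"
proof -
  have ch: "continuous_map K T h" and cg: "continuous_map T K g"
    and gh: "\<forall>x\<in>topspace K. g (h x) = x" and hg: "\<forall>y\<in>topspace T. h (g y) = y"
    using hm unfolding homeomorphic_maps_def by auto
  have sh: "h ` topspace K = topspace T"
  proof
    show "h ` topspace K \<subseteq> topspace T" using ch by (auto simp: continuous_map_def)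
    show "topspace T \<subseteq> h ` topspace K"
    proof
      fix y assume y: "y \<in> topspace T"
      then have "g y \<in> topspace K" using cg by (simp add: continuous_map_def Pi_iff)
      moreover have "y = h (g y)" using hg y by simp
      ultimately show "y \<in> h ` topspace K" by blast
    qed
  qed
  have sg: "g ` topspace T = topspace K"
  proof
    show "g ` topspace T \<subseteq> topspace K" using cg by (auto simp: continuous_map_def)
    show "topspace K \<subseteq> g ` topspace T"
    proof
      fix y assume y: "y \<in> topspace K"
      then have "h y \<in> topspace T" using ch by (simp add: continuous_map_def Pi_iff)
      moreover have "y = g (h y)" using gh y by simp
      ultimately show "y \<in> g ` topspace T" by blast
    qed
  qed
  have "seq_separable T"
  proof -
    obtain D where D: "countable D" "seq_dense K D" using sep unfolding seq_separable_def by blast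
    have "countable (h ` D)" using D(1) by simp
    moreover have "seq_dense T (h ` D)" using seq_dense_image[OF ch sh D(2)] .
    ultimately show ?thesis unfolding seq_separable_def by blast
  qed
  moreover have "\<not> selectively_seq_separable T"
  proof
    assume S: "selectively_seq_separable T"
    have "selectively_seq_separable K"
      unfolding selectively_seq_separable_def
    proof (intro allI impI)
      fix D :: "nat \<Rightarrow> 'a set" assume D: "\<forall>n. seq_dense K (D n)"
      have hD: "\<forall>n. seq_dense T (h ` D n)"
      proof
        fix n show "seq_dense T (h ` D n)" using seq_dense_image[OF ch sh] D by simp
      qed
      have Sall: "\<And>D' :: nat \<Rightarrow> 'b set. (\<forall>n. seq_dense T (D' n)) \<Longrightarrow> \<exists>F. (\<forall>n. finite (F n) \<and> F n \<subseteq> D' n) \<and> seq_dense T (\<Union>n. F n)"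
        using S unfolding selectively_seq_separable_def by blast
      note Sall[OF hD]
      then obtain F where F: "\<forall>n. finite (F n) \<and> F n \<subseteq> h ` D n"
        and Fd: "seq_dense T (\<Union>n. F n)" by (elim exE conjE)
      have "seq_dense K (g ` (\<Union>n. F n))" using seq_dense_image[OF cg sg Fd] .
      moreover have "\<forall>n. finite (g ` F n) \<and> g ` F n \<subseteq> D n"
      proof
        fix n
        have "D n \<subseteq> topspace K" using D unfolding seq_dense_def by auto
        have "g ` F n \<subseteq> D n"
        proof
          fix z assume "z \<in> g ` F n"
          then obtain y where y: "y \<in> F n" "z = g y" by blast
          then obtain w where w: "w \<in> D n" "y = h w" using F by blast
          then have "z = w" using y gh \<open>D n \<subseteq> topspace K\<close> by auto
          then show "z \<in> D n" using w by simp
        qed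
        then show "finite (g ` F n) \<and> g ` F n \<subseteq> D n" using F by simp
      qed
      moreover have "g ` (\<Union>n. F n) = (\<Union>n. g ` F n)" by (rule image_UN)
      ultimately show "\<exists>F. (\<forall>n. finite (F n) \<and> F n \<subseteq> D n) \<and> seq_dense K (\<Union>n. F n)"
        by (intro exI[of _ "\<lambda>n. g ` F n"] conjI) simp_all
    qed
    then show False using nsss by simp
  qed
  ultimately show ?thesis by simp
qed


lemma transfer_to_type:
  fixes K :: "'a topology" and h :: "'a \<Rightarrow> 'b"
  assumes inj: "inj_on h (topspace K)"
  shows "\<exists>T :: 'b topology. \<exists>h g. homeomorphic_maps K T h g"
proof -
  define g where "g = inv_into (topspace K) h"
  define T where "T = pullback_topology (h ` topspace K) g K"
  have tT: "topspace T = h ` topspace K"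
    unfolding T_def topspace_pullback_topology g_def using inj by auto
  have cg: "continuous_map T K g"
    using continuous_map_pullback[OF continuous_map_id, of "h ` topspace K" g]
    unfolding T_def by (simp add: o_def)
  have "continuous_map K K (g \<circ> h)"
    by (rule continuous_map_eq[OF continuous_map_id]) (simp add: g_def inv_into_f_f[OF inj])
  then have ch: "continuous_map K T h"
    unfolding T_def by (rule continuous_map_pullback') auto
  have "homeomorphic_maps K T h g"
    unfolding homeomorphic_maps_def using ch cg tT inj g_def by auto
  then show ?thesis by blast
qed

abbreviation KK :: "real set \<Rightarrow> (real \<Rightarrow> bool) topology" where
  "KK X \<equiv> product_topology (\<lambda>_. discrete_topology (UNIV::bool set)) X"

lemma topspace_KK: "topspace (KK X) = PiE X (\<lambda>_. UNIV)"
  by (simp add: topspace_product_topology)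

lemma KK_limit_iff:
  assumes "\<forall>n. s n \<in> topspace (KK X)" "l \<in> topspace (KK X)"
  shows "limitin (KK X) s l sequentially \<longleftrightarrow> (\<forall>x\<in>X. eventually (\<lambda>n. s n x = l x) sequentially)"
proof -
  have "l \<in> extensional X" using assms(2) by (simp add: topspace_KK PiE_iff)
  then show ?thesis
    using assms(1) by (simp add: limitin_componentwise limitin_discrete_iff)
qed

lemma finite_bound:
  assumes "finite A" "\<forall>a\<in>A. \<exists>m::nat. P a m" "\<And>a m m'. P a m \<Longrightarrow> m \<le> m' \<Longrightarrow> P a m'"
  shows "\<exists>c. \<forall>a\<in>A. P a c"
  using assms(1,2)
proof (induction A rule: finite_induct)
  case empty then show ?case by simp
next
  case (insert a A)
  then obtain c where c: "\<forall>b\<in>A. P b c" by auto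
  obtain m where m: "P a m" using insert by auto
  have "\<forall>b\<in>insert a A. P b (max c m)"
    using c m assms(3) by (metis insert_iff max.cobounded1 max.cobounded2)
  then show ?case by blast
qed


definition EE :: "(nat \<Rightarrow> real set) \<Rightarrow> nat \<Rightarrow> (nat \<Rightarrow> nat \<Rightarrow> bool) \<Rightarrow> (nat \<Rightarrow> nat \<Rightarrow> bool) \<Rightarrow> real set" where
  "EE B k P Q = {x. \<exists>m\<le>k. \<not>(\<exists>i<k. P m i \<and> x \<in> B i) \<and> (\<forall>j\<le>m. \<exists>i<k. Q j i \<and> x \<in> B i)}"

lemma EE_trunc:
  "EE B k P Q = EE B k (\<lambda>m i. (m,i) \<in> {(m,i). P m i} \<inter> ({..k} \<times> {..<k}))
                       (\<lambda>m i. (m,i) \<in> {(m,i). Q m i} \<inter> ({..k} \<times> {..<k}))"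
proof (rule set_eqI, unfold EE_def mem_Collect_eq, rule ex_cong1)
  fix x m
  show "(m \<le> k \<and> \<not>(\<exists>i<k. P m i \<and> x \<in> B i) \<and> (\<forall>j\<le>m. \<exists>i<k. Q j i \<and> x \<in> B i)) =
    (m \<le> k \<and> \<not>(\<exists>i<k. (m,i) \<in> {(m,i). P m i} \<inter> ({..k} \<times> {..<k}) \<and> x \<in> B i) \<and>
      (\<forall>j\<le>m. \<exists>i<k. (j,i) \<in> {(m,i). Q m i} \<inter> ({..k} \<times> {..<k}) \<and> x \<in> B i))"
  proof (cases "m \<le> k")
    case True
    then have jk: "\<And>j. j \<le> m \<Longrightarrow> j \<le> k" by simp
    show ?thesis
    proof (simp only: True simp_thms)
      have "(\<exists>i<k. P m i \<and> x \<in> B i) = (\<exists>i<k. (m,i) \<in> {(m,i). P m i} \<inter> ({..k} \<times> {..<k}) \<and> x \<in> B i)"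
        using True by auto
      moreover have "(\<forall>j\<le>m. \<exists>i<k. Q j i \<and> x \<in> B i) = (\<forall>j\<le>m. \<exists>i<k. (j,i) \<in> {(m,i). Q m i} \<inter> ({..k} \<times> {..<k}) \<and> x \<in> B i)"
        using jk by auto
      ultimately show "(\<not>(\<exists>i<k. P m i \<and> x \<in> B i) \<and> (\<forall>j\<le>m. \<exists>i<k. Q j i \<and> x \<in> B i)) =
        (\<not>(\<exists>i<k. (m,i) \<in> {(m,i). P m i} \<inter> ({..k} \<times> {..<k}) \<and> x \<in> B i) \<and>
        (\<forall>j\<le>m. \<exists>i<k. (j,i) \<in> {(m,i). Q m i} \<inter> ({..k} \<times> {..<k}) \<and> x \<in> B i))" by simp
    qed
  qed simp
qed

lemma countable_EE: "countable {EE B k P Q | k P Q. True}"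
proof -
  define Tk where "Tk k = (\<lambda>S. \<lambda>m i. (m,i) \<in> S) ` Pow ({..k} \<times> {..<(k::nat)})" for k
  have fin: "finite (Tk k)" for k unfolding Tk_def by simp
  have "{EE B k P Q | k P Q. True} \<subseteq> (\<Union>k. (\<lambda>(P,Q). EE B k P Q) ` (Tk k \<times> Tk k))"
  proof
    fix E assume "E \<in> {EE B k P Q | k P Q. True}"
    then obtain k P Q where E: "E = EE B k P Q" by blast
    let ?P = "\<lambda>m i. (m,i) \<in> {(m,i). P m i} \<inter> ({..k} \<times> {..<k})"
    let ?Q = "\<lambda>m i. (m,i) \<in> {(m,i). Q m i} \<inter> ({..k} \<times> {..<k})"
    have "?P \<in> Tk k" "?Q \<in> Tk k" unfolding Tk_def by (rule image_eqI, rule refl, blast)+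
    then show "E \<in> (\<Union>k. (\<lambda>(P,Q). EE B k P Q) ` (Tk k \<times> Tk k))"
      using E EE_trunc[of B k P Q] by blast
  qed
  moreover have "countable (\<Union>k. (\<lambda>(P,Q). EE B k P Q) ` (Tk k \<times> Tk k))"
    using fin by (intro countable_UN) (auto intro: countable_finite)
  ultimately show ?thesis by (rule countable_subset)
qed

lemma basis_ev:
  assumes Bp: "\<And>S x. open S \<Longrightarrow> x \<in> S \<Longrightarrow> \<exists>i. x \<in> B i \<and> B i \<subseteq> S"
    and "open W" "x \<in> W"
  shows "eventually (\<lambda>k. \<exists>i<k. B i \<subseteq> W \<and> x \<in> B i) sequentially"
proof -
  obtain i where "x \<in> B i" "B i \<subseteq> W" using Bp assms(2,3) by blast
  then show ?thesis unfolding eventually_sequentially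
    by (intro exI[of _ "Suc i"]) (auto intro!: exI[of _ i])
qed

lemma EE_in:
  assumes Bp: "\<And>S x. open S \<Longrightarrow> x \<in> S \<Longrightarrow> \<exists>i. x \<in> B i \<and> B i \<subseteq> S"
    and oU: "\<And>j. open (U j)" and xU: "\<forall>j. x \<in> U j" and xV: "x \<notin> V m"
  shows "eventually (\<lambda>k. x \<in> EE B k (\<lambda>m i. B i \<subseteq> V m) (\<lambda>j i. B i \<subseteq> U j)) sequentially"
proof -
  have "eventually (\<lambda>k. \<forall>j\<in>{..m}. \<exists>i<k. B i \<subseteq> U j \<and> x \<in> B i) sequentially"
    using basis_ev[OF Bp oU xU[rule_format]] by (intro eventually_ball_finite) auto
  moreover have "eventually (\<lambda>k. m \<le> k) sequentially" by (rule eventually_ge_at_top)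
  ultimately show ?thesis
  proof (rule eventually_elim2)
    fix k assume 1: "\<forall>j\<in>{..m}. \<exists>i<k. B i \<subseteq> U j \<and> x \<in> B i" and 2: "m \<le> k"
    have "\<not>(\<exists>i<k. B i \<subseteq> V m \<and> x \<in> B i)" using xV by blast
    then show "x \<in> EE B k (\<lambda>m i. B i \<subseteq> V m) (\<lambda>j i. B i \<subseteq> U j)"
      unfolding EE_def using 1 2 by blast
  qed
qed

lemma EE_out:
  assumes Bp: "\<And>S x. open S \<Longrightarrow> x \<in> S \<Longrightarrow> \<exists>i. x \<in> B i \<and> B i \<subseteq> S"
    and oV: "\<And>j. open (V j)" and xV: "\<forall>j. x \<in> V j" and xU: "x \<notin> U m0"
  shows "eventually (\<lambda>k. x \<notin> EE B k (\<lambda>m i. B i \<subseteq> V m) (\<lambda>j i. B i \<subseteq> U j)) sequentially"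
proof -
  have "eventually (\<lambda>k. \<forall>j\<in>{..<m0}. \<exists>i<k. B i \<subseteq> V j \<and> x \<in> B i) sequentially"
    using basis_ev[OF Bp oV xV[rule_format]] by (intro eventually_ball_finite) auto
  then show ?thesis
  proof (rule eventually_mono)
    fix k assume 1: "\<forall>j\<in>{..<m0}. \<exists>i<k. B i \<subseteq> V j \<and> x \<in> B i"
    show "x \<notin> EE B k (\<lambda>m i. B i \<subseteq> V m) (\<lambda>j i. B i \<subseteq> U j)"
    proof
      assume "x \<in> EE B k (\<lambda>m i. B i \<subseteq> V m) (\<lambda>j i. B i \<subseteq> U j)"
      then obtain m where m: "m \<le> k" "\<not>(\<exists>i<k. B i \<subseteq> V m \<and> x \<in> B i)"
        "\<forall>j\<le>m. \<exists>i<k. B i \<subseteq> U j \<and> x \<in> B i" unfolding EE_def by blast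
      show False
      proof (cases "m < m0")
        case True then show False using 1 m(2) by auto
      next
        case False
        then have "m0 \<le> m" by simp
        then obtain i where "B i \<subseteq> U m0" "x \<in> B i" using m(3) by blast
        then show False using xU by blast
      qed
    qed
  qed
qed

lemma KK_seq_separable:
  assumes Q: "Q_set X"
  shows "seq_separable (KK X)"
proof -
  obtain B :: "nat \<Rightarrow> real set" where "inj B" and Bo: "\<And>n. open (B n)"
    and Bu: "\<And>S. open S \<Longrightarrow> \<exists>k. S = \<Union>{B n |n. n \<in> k}"
    by (rule univ_second_countable_sequence[where 'a=real]) simp
  have Bp: "\<exists>i. x \<in> B i \<and> B i \<subseteq> S" if "open S" "x \<in> S" for S x
  proof -
    obtain k where S: "S = \<Union>{B n |n. n \<in> k}" using Bu[OF \<open>open S\<close>] by blast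
    then obtain n where "x \<in> B n" "n \<in> k" using \<open>x \<in> S\<close> by blast
    moreover have "B n \<subseteq> S" using S \<open>n \<in> k\<close> by blast
    ultimately show ?thesis by blast
  qed
  define D where "D = (\<lambda>E. restrict (\<lambda>x. x \<in> E) X) ` {EE B k P Q | k P Q. True}"
  have cD: "countable D" unfolding D_def using countable_EE by simp
  have "seq_dense (KK X) D"
    unfolding seq_dense_def
  proof (intro conjI ballI)
    show "D \<subseteq> topspace (KK X)" unfolding D_def topspace_KK by (rule image_subsetI) (simp add: PiE_iff)
  next
    fix psi assume psi: "psi \<in> topspace (KK X)"
    define A where "A = {x\<in>X. psi x}"
    have AX: "A \<subseteq> X" "X - A \<subseteq> X" unfolding A_def by auto
    from Q[unfolded Q_set_def, rule_format, OF AX(1)]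
    obtain U :: "nat \<Rightarrow> real set" where "(\<forall>n. open (U n)) \<and> A = X \<inter> (\<Inter>n. U n)" ..
    then have oU: "\<forall>n. open (U n)" and AU: "A = X \<inter> (\<Inter>n. U n)" by simp_all
    from Q[unfolded Q_set_def, rule_format, OF AX(2)]
    obtain V :: "nat \<Rightarrow> real set" where "(\<forall>n. open (V n)) \<and> X - A = X \<inter> (\<Inter>n. V n)" ..
    then have oV: "\<forall>n. open (V n)" and AV: "X - A = X \<inter> (\<Inter>n. V n)" by simp_all
    define s where "s k = restrict (\<lambda>x. x \<in> EE B k (\<lambda>m i. B i \<subseteq> V m) (\<lambda>j i. B i \<subseteq> U j)) X" for k
    have mem: "EE B k (\<lambda>m i. B i \<subseteq> V m) (\<lambda>j i. B i \<subseteq> U j) \<in> {EE B k P Q | k P Q. True}" for k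
      by (rule CollectI, intro exI conjI, rule refl, rule TrueI)
    have sD: "\<forall>k. s k \<in> D" unfolding s_def D_def using mem by (intro allI imageI)
    have sT: "\<forall>k. s k \<in> topspace (KK X)" unfolding s_def topspace_KK by (simp add: PiE_iff)
    have "\<forall>x\<in>X. eventually (\<lambda>k. s k x = psi x) sequentially"
    proof
      fix x assume xX: "x \<in> X"
      show "eventually (\<lambda>k. s k x = psi x) sequentially"
      proof (cases "psi x")
        case True
        then have "x \<in> A" using xX A_def by simp
        then have xU: "\<forall>j. x \<in> U j" using AU by blast
        have "x \<notin> X - A" using \<open>x \<in> A\<close> by simp
        then obtain m where "x \<notin> V m" using AV xX by blast
        have "eventually (\<lambda>k. x \<in> EE B k (\<lambda>m i. B i \<subseteq> V m) (\<lambda>j i. B i \<subseteq> U j)) sequentially"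
          by (rule EE_in[where B=B and U=U and V=V and x=x, OF Bp oU[rule_format] xU \<open>x \<notin> V m\<close>])
        then show ?thesis by (rule eventually_mono) (simp add: s_def xX True)
      next
        case False
        then have "x \<in> X - A" using xX A_def by simp
        then have xV: "\<forall>j. x \<in> V j" using AV by blast
        have "x \<notin> A" using \<open>x \<in> X - A\<close> by simp
        then obtain m0 where "x \<notin> U m0" using AU xX by blast
        have "eventually (\<lambda>k. x \<notin> EE B k (\<lambda>m i. B i \<subseteq> V m) (\<lambda>j i. B i \<subseteq> U j)) sequentially"
          by (rule EE_out[where B=B and U=U and V=V and x=x, OF Bp oV[rule_format] xV \<open>x \<notin> U m0\<close>])
        then show ?thesis by (rule eventually_mono) (simp add: s_def xX False)
      qed
    qed
    then have "limitin (KK X) s psi sequentially"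
      using KK_limit_iff[OF sT psi] by simp
    then show "\<exists>s. (\<forall>n. s n \<in> D) \<and> limitin (KK X) s psi sequentially"
      using sD by blast
  qed
  then show ?thesis using cD unfolding seq_separable_def by blast
qed

lemma KK_not_sss:
  fixes X :: "real set" and e :: "real \<Rightarrow> nat \<Rightarrow> nat"
  assumes inf: "infinite X" and unb: "\<And>G. \<exists>x\<in>X. \<not> le_star (e x) G"
  shows "\<not> selectively_seq_separable (KK X)"
proof
  assume S: "selectively_seq_separable (KK X)"
  define Dn where "Dn n = {\<phi> \<in> topspace (KK X). (\<exists>x\<in>X. \<phi> x) \<and>
      (\<exists>m. \<forall>x\<in>X. \<not> \<phi> x \<longrightarrow> (\<forall>j\<le>n. e x j < m))}" for n :: nat
  obtain xs :: "nat \<Rightarrow> real" where xinj: "inj xs" and xX: "range xs \<subseteq> X"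
    using infinite_countable_subset[OF inf] by blast
  have dense: "seq_dense (KK X) (Dn n)" for n
    unfolding seq_dense_def
  proof (intro conjI ballI)
    show "Dn n \<subseteq> topspace (KK X)" unfolding Dn_def by blast
  next
    fix psi assume psi: "psi \<in> topspace (KK X)"
    define s where "s m = restrict (\<lambda>x. psi x \<or> x = xs m \<or> (\<exists>j\<le>n. m \<le> e x j)) X" for m
    have sT: "\<forall>m. s m \<in> topspace (KK X)" unfolding s_def topspace_KK by (simp add: PiE_iff)
    have sD: "\<forall>m. s m \<in> Dn n"
    proof
      fix m
      have "xs m \<in> X" using xX by blast
      then have "\<exists>x\<in>X. s m x" unfolding s_def by auto
      moreover have "\<forall>x\<in>X. \<not> s m x \<longrightarrow> (\<forall>j\<le>n. e x j < m)"
      proof (intro ballI impI allI)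
        fix x j assume "x \<in> X" "\<not> s m x" "j \<le> n"
        then have "\<not> (m \<le> e x j)" unfolding s_def by auto
        then show "e x j < m" by simp
      qed
      ultimately show "s m \<in> Dn n" unfolding Dn_def using sT by blast
    qed
    have "\<forall>x\<in>X. eventually (\<lambda>m. s m x = psi x) sequentially"
    proof
      fix x assume x: "x \<in> X"
      have ev1: "eventually (\<lambda>m. x \<noteq> xs m) sequentially"
      proof (cases "x \<in> range xs")
        case True
        then obtain m0 where m0: "x = xs m0" by blast
        have "eventually (\<lambda>m. Suc m0 \<le> m) sequentially" by (rule eventually_ge_at_top)
        then show ?thesis
        proof (rule eventually_mono)
          fix m assume "Suc m0 \<le> m"
          then have "m \<noteq> m0" by simp
          then show "x \<noteq> xs m" using m0 xinj by (metis injD)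
        qed
      next
        case False then show ?thesis by (auto intro: always_eventually)
      qed
      have ev2: "eventually (\<lambda>m. \<forall>j\<in>{..n}. e x j < m) sequentially"
      proof (rule eventually_ball_finite)
        show "finite {..n}" by simp
        show "\<forall>j\<in>{..n}. eventually (\<lambda>m. e x j < m) sequentially"
        proof
          fix j
          have "eventually (\<lambda>m. Suc (e x j) \<le> m) sequentially" by (rule eventually_ge_at_top)
          then show "eventually (\<lambda>m. e x j < m) sequentially" by (rule eventually_mono) simp
        qed
      qed
      from ev1 ev2 show "eventually (\<lambda>m. s m x = psi x) sequentially"
      proof (rule eventually_elim2)
        fix m assume a: "x \<noteq> xs m" "\<forall>j\<in>{..n}. e x j < m"
        then have "\<not> (\<exists>j\<le>n. m \<le> e x j)" by (auto simp: not_le)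
        then show "s m x = psi x" unfolding s_def using x a(1) by (simp, blast)
      qed
    qed
    then have "limitin (KK X) s psi sequentially" using KK_limit_iff[OF sT psi] by simp
    then show "\<exists>s. (\<forall>k. s k \<in> Dn n) \<and> limitin (KK X) s psi sequentially"
      using sD by (intro exI[of _ s] conjI) auto
  qed
  have Sall: "\<And>D' :: nat \<Rightarrow> (real \<Rightarrow> bool) set. (\<forall>n. seq_dense (KK X) (D' n)) \<Longrightarrow>
      \<exists>F. (\<forall>n. finite (F n) \<and> F n \<subseteq> D' n) \<and> seq_dense (KK X) (\<Union>n. F n)"
    using S unfolding selectively_seq_separable_def by blast
  have "\<forall>n. seq_dense (KK X) (Dn n)" using dense by blast
  from Sall[OF this] obtain F :: "nat \<Rightarrow> (real \<Rightarrow> bool) set"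
    where F: "\<forall>n. finite (F n) \<and> F n \<subseteq> Dn n" and Fd: "seq_dense (KK X) (\<Union>n. F n)"
    by blast
  define zero where "zero = restrict (\<lambda>x::real. False) X"
  have zT: "zero \<in> topspace (KK X)" unfolding zero_def topspace_KK by (simp add: PiE_iff)
  obtain s where sF: "\<forall>k. s k \<in> (\<Union>n. F n)" and sl: "limitin (KK X) s zero sequentially"
    using Fd zT unfolding seq_dense_def by blast
  have sT: "\<forall>k. s k \<in> topspace (KK X)"
    using sF Fd unfolding seq_dense_def by blast
  have sz: "\<forall>x\<in>X. eventually (\<lambda>k. \<not> s k x) sequentially"
    using sl KK_limit_iff[OF sT zT] unfolding zero_def by simp
  have "\<forall>n. \<exists>c. \<forall>\<phi>\<in>F n. \<forall>x\<in>X. \<not> \<phi> x \<longrightarrow> (\<forall>j\<le>n. e x j < c)"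
  proof
    fix n
    show "\<exists>c. \<forall>\<phi>\<in>F n. \<forall>x\<in>X. \<not> \<phi> x \<longrightarrow> (\<forall>j\<le>n. e x j < c)"
    proof (rule finite_bound)
      show "finite (F n)" using F by blast
      show "\<forall>\<phi>\<in>F n. \<exists>m. \<forall>x\<in>X. \<not> \<phi> x \<longrightarrow> (\<forall>j\<le>n. e x j < m)"
        using F unfolding Dn_def by blast
    qed (auto intro: less_le_trans)
  qed
  then obtain c where c: "\<And>n \<phi> x j. \<phi> \<in> F n \<Longrightarrow> x \<in> X \<Longrightarrow> \<not> \<phi> x \<Longrightarrow> j \<le> n \<Longrightarrow> e x j < c n"
    by metis
  have "\<forall>k. \<exists>n. s k \<in> F n" using sF by blast
  then obtain N where N: "\<And>k. s k \<in> F (N k)" by metis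
  have nz: "\<And>k. \<exists>x\<in>X. s k x"
  proof -
    fix k
    have "s k \<in> Dn (N k)" using F N by blast
    then show "\<exists>x\<in>X. s k x" unfolding Dn_def by blast
  qed
  show False
  proof (cases "\<exists>Bd. \<forall>k. N k \<le> Bd")
    case True
    then obtain Bd where Bd: "\<And>k. N k \<le> Bd" by blast
    define Fin where "Fin = (\<Union>n\<in>{..Bd}. F n)"
    have finF: "finite Fin" unfolding Fin_def using F by auto
    have inF: "\<And>k. s k \<in> Fin" unfolding Fin_def using N Bd by blast
    have wex: "\<forall>\<phi>\<in>Fin. \<exists>x\<in>X. \<phi> x"
    proof
      fix \<phi> assume "\<phi> \<in> Fin"
      then obtain n where "\<phi> \<in> F n" unfolding Fin_def by blast
      then have "\<phi> \<in> Dn n" using F by blast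
      then show "\<exists>x\<in>X. \<phi> x" unfolding Dn_def by blast
    qed
    then obtain w where w: "\<And>\<phi>. \<phi> \<in> Fin \<Longrightarrow> w \<phi> \<in> X \<and> \<phi> (w \<phi>)" by metis
    have "eventually (\<lambda>k. \<forall>\<phi>\<in>Fin. \<not> s k (w \<phi>)) sequentially"
    proof (rule eventually_ball_finite[OF finF])
      show "\<forall>\<phi>\<in>Fin. eventually (\<lambda>k. \<not> s k (w \<phi>)) sequentially"
        using sz w by blast
    qed
    then obtain K0 where K0: "\<And>k. K0 \<le> k \<Longrightarrow> \<forall>\<phi>\<in>Fin. \<not> s k (w \<phi>)"
      unfolding eventually_sequentially by blast
    have "\<not> s K0 (w (s K0))" using K0[of K0] inF by blast
    moreover have "s K0 (w (s K0))" using w inF by blast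
    ultimately show False by simp
  next
    case False
    then have unbN: "\<And>n. \<exists>k. n \<le> N k" by (meson nle_le)
    define kk where "kk n = (LEAST k. n \<le> N k)" for n
    have kk: "\<And>n. n \<le> N (kk n)" unfolding kk_def using unbN by (rule LeastI_ex)
    define G where "G n = c (N (kk n))" for n
    obtain x where x: "x \<in> X" and nle: "\<not> le_star (e x) G" using unb by blast
    obtain K0 where K0: "\<And>k. K0 \<le> k \<Longrightarrow> \<not> s k x"
      using sz x unfolding eventually_sequentially by blast
    define M where "M = Max (insert 0 (N ` {..<K0}))"
    have M: "\<And>k. k < K0 \<Longrightarrow> N k \<le> M" unfolding M_def by (intro Max_ge) auto
    have "\<not> (\<forall>n\<ge>Suc M. e x n \<le> G n)"
      using nle unfolding le_star_def eventually_sequentially by blast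
    then obtain n where n: "Suc M \<le> n" "G n < e x n" by (auto simp: not_le)
    have "K0 \<le> kk n"
    proof (rule ccontr)
      assume "\<not> K0 \<le> kk n"
      then have "N (kk n) \<le> M" using M by simp
      then show False using kk[of n] n(1) by simp
    qed
    then have "\<not> s (kk n) x" using K0 by blast
    then have "e x n < c (N (kk n))" using c[OF N x] kk[of n] by blast
    then show False using n(2) unfolding G_def by simp
  qed
qed

lemma KK_inj:
  assumes Q: "Q_set X"
  shows "\<exists>h :: (real \<Rightarrow> bool) \<Rightarrow> real. inj_on h (topspace (KK X))"
proof -
  obtain B :: "nat \<Rightarrow> real set" where "inj B" and Bo: "\<And>n. open (B n)"
    and Bu: "\<And>S. open S \<Longrightarrow> \<exists>k. S = \<Union>{B n |n. n \<in> k}"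
    by (rule univ_second_countable_sequence[where 'a=real]) simp
  have rec: "S = \<Union>{B i | i. B i \<subseteq> S}" if "open S" for S
  proof
    obtain k where S: "S = \<Union>{B n |n. n \<in> k}" using Bu[OF \<open>open S\<close>] by blast
    show "S \<subseteq> \<Union>{B i | i. B i \<subseteq> S}"
    proof
      fix x assume "x \<in> S"
      then obtain n where "x \<in> B n" "n \<in> k" using S by blast
      moreover have "B n \<subseteq> S" using S \<open>n \<in> k\<close> by blast
      ultimately show "x \<in> \<Union>{B i | i. B i \<subseteq> S}" by blast
    qed
  qed blast
  define Uc where "Uc \<phi> = (SOME U :: nat \<Rightarrow> real set. (\<forall>n. open (U n)) \<and> {x\<in>X. \<phi> x} = X \<inter> (\<Inter>n. U n))"
    for \<phi> :: "real \<Rightarrow> bool"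
  have Uc: "(\<forall>n. open (Uc \<phi> n)) \<and> {x\<in>X. \<phi> x} = X \<inter> (\<Inter>n. Uc \<phi> n)" for \<phi>
  proof -
    have sub: "{x\<in>X. \<phi> x} \<subseteq> X" by blast
    show ?thesis unfolding Uc_def by (rule someI_ex[OF Q[unfolded Q_set_def, rule_format, OF sub]])
  qed
  define code where "code \<phi> = {prod_encode (n,i) | n i. B i \<subseteq> Uc \<phi> n}" for \<phi>
  have mem: "prod_encode (n,i) \<in> code \<phi> \<longleftrightarrow> B i \<subseteq> Uc \<phi> n" for n i \<phi>
  proof
    assume "prod_encode (n,i) \<in> code \<phi>"
    then obtain n' i' where "prod_encode (n,i) = prod_encode (n',i')" "B i' \<subseteq> Uc \<phi> n'"
      unfolding code_def by blast
    then show "B i \<subseteq> Uc \<phi> n" using inj_prod_encode[of UNIV] by (auto dest: inj_onD)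
  qed (auto simp: code_def)
  have Ueq: "Uc \<phi> n = \<Union>{B i | i. prod_encode (n,i) \<in> code \<phi>}" for \<phi> n
    using rec[of "Uc \<phi> n"] Uc[of \<phi>] by (simp add: mem)
  have "inj_on code (topspace (KK X))"
  proof (rule inj_onI)
    fix \<phi> \<psi> assume p: "\<phi> \<in> topspace (KK X)" and q: "\<psi> \<in> topspace (KK X)" and c: "code \<phi> = code \<psi>"
    have "Uc \<phi> n = Uc \<psi> n" for n using Ueq[of \<phi> n] Ueq[of \<psi> n] c by simp
    then have "Uc \<phi> = Uc \<psi>" by blast
    then have A: "{x\<in>X. \<phi> x} = {x\<in>X. \<psi> x}" using Uc[of \<phi>] Uc[of \<psi>] by simp
    show "\<phi> = \<psi>"
    proof (rule extensionalityI)
      show "\<phi> \<in> extensional X" "\<psi> \<in> extensional X" using p q by (auto simp: topspace_KK PiE_iff)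
      fix x assume "x \<in> X" then show "\<phi> x = \<psi> x" using A by blast
    qed
  qed
  moreover obtain f :: "nat set \<Rightarrow> real" where "bij_betw f UNIV UNIV"
    using nat_sets_eqpoll_reals unfolding eqpoll_def by blast
  then have "inj f" by (rule bij_betw_imp_inj_on)
  ultimately have "inj_on (f \<circ> code) (topspace (KK X))"
    by (intro comp_inj_on) (auto intro: inj_on_subset)
  then show ?thesis by blast
qed


theorem theorem5p1:
  assumes "b_less_q"
  shows "\<exists>T :: real topology. compact_space T \<and> Hausdorff_space T \<and>
           seq_separable T \<and> \<not> selectively_seq_separable T"
proof -
  from assms[unfolded b_less_q_def] obtain F :: "(nat \<Rightarrow> nat) set" where
    F1: "unbounded_family F" and
    F3: "\<forall>Y :: (nat \<Rightarrow> nat) set. (card_of Y, card_of F) \<in> ordLeq \<longrightarrow>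
          (\<exists>X :: real set. Q_set X \<and> (card_of X, card_of Y) \<in> ordIso)"
    by blast
  have "(card_of F, card_of F) \<in> ordLeq" by (rule ordIso_imp_ordLeq[OF card_of_refl])
  then obtain X :: "real set" where QX: "Q_set X" and iso: "(card_of X, card_of F) \<in> ordIso"
    using F3 by blast
  obtain e where e: "bij_betw e X F" using iso card_of_ordIso by blast
  then have eX: "e ` X = F" by (rule bij_betw_imp_surj_on)
  have unb: "\<exists>x\<in>X. \<not> le_star (e x) G" for G
  proof -
    have "\<exists>f\<in>F. \<not> le_star f G" using F1 unfolding unbounded_family_def by blast
    then show ?thesis using eX by blast
  qed
  have inf: "infinite X"
  proof
    assume "finite X"
    then have fF: "finite F" using eX by blast
    define G where "G n = (\<Sum>f\<in>F. f n)" for n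
    have "\<forall>f\<in>F. le_star f G"
    proof
      fix f assume "f \<in> F"
      have "\<forall>n. f n \<le> G n"
      proof
        fix n show "f n \<le> G n" unfolding G_def
          using member_le_sum[where f="\<lambda>g. g n" and i=f and A=F] \<open>f \<in> F\<close> fF by simp
      qed
      then show "le_star f G" unfolding le_star_def by (simp add: always_eventually)
    qed
    then show False using F1 unfolding unbounded_family_def by blast
  qed
  have sep: "seq_separable (KK X)" by (rule KK_seq_separable[OF QX])
  have nsss: "\<not> selectively_seq_separable (KK X)" by (rule KK_not_sss[OF inf unb])
  obtain h :: "(real \<Rightarrow> bool) \<Rightarrow> real" where hi: "inj_on h (topspace (KK X))"
    using KK_inj[OF QX] by blast
  obtain T :: "real topology" and h' g where hm: "homeomorphic_maps (KK X) T h' g"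
    using transfer_to_type[OF hi] by blast
  have hs: "KK X homeomorphic_space T" unfolding homeomorphic_space_def using hm by blast
  have "compact_space (KK X)"
    by (simp add: compact_space_product_topology compact_space_discrete_topology)
  then have "compact_space T" using homeomorphic_compact_space[OF hs] by simp
  moreover have "Hausdorff_space (KK X)"
    by (simp add: Hausdorff_space_product_topology)
  then have "Hausdorff_space T" using homeomorphic_Hausdorff_space[OF hs] by simp
  moreover have "seq_separable T \<and> \<not> selectively_seq_separable T"
    by (rule transfer_props[OF hm sep nsss])
  ultimately show ?thesis by blast
qed

end
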